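(* Let $y_0\in\mathbb{R}$, $b>0$, $\epsilon>0$, and let $f:[y_0,\infty)\to\mathbb{R}$ be such that $p:=1/f$ is well defined and twice differentiable on $[y_0,\infty)$, with $f(y_0)>0$, $f'(y)>0$ and $p''(y)>0$ for all $y\ge y_0$. Assume $b<\int_{y_0}^{\infty}p(y)\,dy$ (possibly $+\infty$). For $h>0$ and integers $N\ge0$ define $$\Sigma_{l,h,N}=\sum_{i=1}^{N}h\,p(y_0+hi),\qquad \Sigma_{t,h,N}=\sum_{i=1}^{N}\frac h2\big(p(y_0+hi)+p(y_0+h(i-1))\big).$$ For each positive integer $j$ let $h^{(j)}=\epsilon/j$, let $n_2^{(j)}$ be the smallest positive integer $N$ with $\Sigma_{l,h^{(j)},N}\ge b$ (assume $n_2^{(1)}$ exists), and let $n_3^{(j)}$ be the largest integer $N\ge0$ with $\Sigma_{t,h^{(j)},N}\le b$. Then for every positive integer $j$, $$n_2^{(j)}>n_3^{(j)}\qquad\text{and}\qquad h^{(j)}\,n_3^{(j)}\ge h^{(1)}\,n_3^{(1)}.$$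
   Context: $\Sigma_{l,h,N}$ and $\Sigma_{t,h,N}$ are the lower rectangular and trapezoidal sums with step $h$ for $\int_{y_0}^{y_0+hN}p(y)\,dy$; empty sums are $0$. *)

theory Defs
  imports "HOL-Analysis.Analysis"
begin

definition sigma_l :: "(real \<Rightarrow> real) \<Rightarrow> real \<Rightarrow> real \<Rightarrow> nat \<Rightarrow> real" where
  "sigma_l p y0 h N = (\<Sum>i=1..N. h * p (y0 + h * real i))"

definition sigma_t :: "(real \<Rightarrow> real) \<Rightarrow> real \<Rightarrow> real \<Rightarrow> nat \<Rightarrow> real" where
  "sigma_t p y0 h N =
     (\<Sum>i=1..N. h / 2 * (p (y0 + h * real i) + p (y0 + h * (real i - 1))))"

definition n2 :: "(real \<Rightarrow> real) \<Rightarrow> real \<Rightarrow> real \<Rightarrow> real \<Rightarrow> nat" where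
  "n2 p y0 b h = (LEAST N. 0 < N \<and> b \<le> sigma_l p y0 h N)"

definition n3 :: "(real \<Rightarrow> real) \<Rightarrow> real \<Rightarrow> real \<Rightarrow> real \<Rightarrow> nat" where
  "n3 p y0 b h = (GREATEST N. sigma_t p y0 h N \<le> b)"

end

theory Submission
  imports Defs
begin

lemma at_of_within:
  assumes "x > y0" "(g has_real_derivative d)(at x within {y0..})"
  shows "(g has_real_derivative d) (at x)"
proof -
  have "x \<in> interior {y0..}" using assms(1) by (simp add: interior_real_atLeast)
  then have eq: "at x within {y0..} = at x" by (rule at_within_interior)
  show ?thesis using assms(2) unfolding eq .
qed

lemma cont_of_within:
  assumes "\<And>x. x \<ge> y0 \<Longrightarrow> (g has_real_derivative d x)(at x within {y0..})"
  shows "continuous_on {y0..} g"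
proof (subst continuous_on_eq_continuous_within, intro ballI)
  fix x assume "x \<in> {y0..}"
  then show "continuous (at x within {y0..}) g" using DERIV_continuous[OF assms[of x]] by auto
qed

lemma conv_lemma:
  fixes p p' :: "real \<Rightarrow> real"
  assumes der: "\<And>z. x < z \<Longrightarrow> z < y \<Longrightarrow> (p has_real_derivative p' z) (at z)"
    and cont: "continuous_on {x..y} p"
    and mono: "\<And>u v. x < u \<Longrightarrow> u \<le> v \<Longrightarrow> v < y \<Longrightarrow> p' u \<le> p' v"
    and xy: "x < y" and t: "0 < t" "t < 1"
  shows "p ((1-t)*x + t*y) \<le> (1-t) * p x + t * p y"
proof -
  define z where "z = (1-t)*x + t*y"
  have zx: "z - x = t*(y-x)" and yz: "y - z = (1-t)*(y-x)" by (simp_all add: z_def algebra_simps)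
  have "t*(y-x) > 0" "(1-t)*(y-x) > 0" using t xy by simp_all
  then have xz: "x < z" using zx by linarith
  have zy: "z < y" using yz \<open>(1-t)*(y-x) > 0\<close> by linarith
  have c1: "continuous_on {x..z} p" by (rule continuous_on_subset[OF cont]) (use zy in auto)
  have c2: "continuous_on {z..y} p" by (rule continuous_on_subset[OF cont]) (use xz in auto)
  have d1: "p differentiable (at w)" if "x < w" "w < z" for w
    using der[of w] that zy real_differentiable_def by auto
  have d2: "p differentiable (at w)" if "z < w" "w < y" for w
    using der[of w] that xz real_differentiable_def by auto
  obtain l1 \<xi> where 1: "x < \<xi>" "\<xi> < z" "DERIV p \<xi> :> l1" "p z - p x = (z - x) * l1"
    using MVT[OF xz c1 d1] by blast
  obtain l2 \<eta> where 2: "z < \<eta>" "\<eta> < y" "DERIV p \<eta> :> l2" "p y - p z = (y - z) * l2"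
    using MVT[OF zy c2 d2] by blast
  have l1: "l1 = p' \<xi>" using 1 der[of \<xi>] zy by (intro DERIV_unique) auto
  have l2: "l2 = p' \<eta>" using 2 der[of \<eta>] xz by (intro DERIV_unique) auto
  have "p' \<xi> \<le> p' \<eta>" using 1(1,2) 2(1,2) by (intro mono) auto
  then have l12: "l1 \<le> l2" unfolding l1 l2 .
  have c: "0 \<le> t*(y-x)*(1-t)" using t xy by (intro mult_nonneg_nonneg) auto
  have e1: "(p z - p x) * (1-t) = t*(y-x)*(1-t)*l1" unfolding 1(4) zx by (simp add: algebra_simps)
  have e2: "(p y - p z) * t = t*(y-x)*(1-t)*l2" unfolding 2(4) yz by (simp add: algebra_simps)
  have "t*(y-x)*(1-t)*l1 \<le> t*(y-x)*(1-t)*l2" by (rule mult_left_mono[OF l12 c])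
  then have "(p z - p x) * (1-t) \<le> (p y - p z) * t" unfolding e1 e2 .
  moreover have "(p z - p x) * (1-t) = p z - t*p z - (1-t)*p x" by (simp add: algebra_simps)
  moreover have "(p y - p z) * t = t*p y - t*p z" by (simp add: algebra_simps)
  ultimately have "p z \<le> (1-t) * p x + t * p y" by linarith
  then show ?thesis unfolding z_def by simp
qed

definition LS :: "(real \<Rightarrow> real) \<Rightarrow> real \<Rightarrow> real \<Rightarrow> nat \<Rightarrow> real" where
  "LS p y0 h N = (\<Sum>i<N. h * p (y0 + h * real (Suc i)))"
definition TS :: "(real \<Rightarrow> real) \<Rightarrow> real \<Rightarrow> real \<Rightarrow> nat \<Rightarrow> real" where
  "TS p y0 h N = (\<Sum>i<N. h / 2 * (p (y0 + h * real (Suc i)) + p (y0 + h * real i)))"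

lemma sigma_l_LS: "sigma_l p y0 h N = LS p y0 h N"
  unfolding sigma_l_def LS_def by (induction N) auto

lemma sigma_t_TS: "sigma_t p y0 h N = TS p y0 h N"
  unfolding sigma_t_def TS_def by (induction N) auto

lemma sum_split: "(\<Sum>i<n+m. g i) = (\<Sum>i<n. g i) + (\<Sum>i<m. g (n+i))" for n m :: nat and g :: "nat \<Rightarrow> real"
  by (induction m) auto

lemma LS_split: "LS p y0 h (n+m) = LS p y0 h n + (\<Sum>i<m. h * p (y0 + h * real (Suc (n+i))))"
  unfolding LS_def by (rule sum_split)

lemma TS_split: "TS p y0 h (n+m) = TS p y0 h n +
   (\<Sum>i<m. h / 2 * (p (y0 + h * real (Suc (n+i))) + p (y0 + h * real (n+i))))"
  unfolding TS_def by (rule sum_split)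

locale pfun =
  fixes p :: "real \<Rightarrow> real" and y0 :: real
  assumes pos: "\<And>x. y0 \<le> x \<Longrightarrow> p x > 0"
    and dec: "\<And>x y. y0 \<le> x \<Longrightarrow> x < y \<Longrightarrow> p y < p x"
    and conv: "\<And>x y t. y0 \<le> x \<Longrightarrow> x \<le> y \<Longrightarrow> 0 \<le> t \<Longrightarrow> t \<le> 1 \<Longrightarrow>
       p ((1-t)*x + t*y) \<le> (1-t)*p x + t*p y"
begin

lemma dec': "y0 \<le> x \<Longrightarrow> x \<le> y \<Longrightarrow> p y \<le> p x"
  using dec[of x y] by (cases "x = y") auto

lemma TS_gt_LS:
  assumes h: "h > 0" and M: "M > 0"
  shows "TS p y0 h M > LS p y0 h M"
proof -
  have "TS p y0 h M - LS p y0 h M = (\<Sum>i<M. h/2 * (p (y0 + h*real i) - p (y0 + h * real (Suc i))))"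
    unfolding TS_def LS_def sum_subtractf[symmetric] by (rule sum.cong) (auto simp: algebra_simps)
  also have "\<dots> > 0"
  proof (rule sum_pos)
    fix i assume "i \<in> {..<M}"
    have "p (y0 + h * real (Suc i)) < p (y0 + h*real i)"
      using h by (intro dec) auto
    then show "0 < h/2 * (p (y0 + h*real i) - p (y0 + h * real (Suc i)))" using h by simp
  qed (use M in auto)
  finally show ?thesis by simp
qed

lemma TS_strict:
  assumes h: "h > 0" and "N < N'"
  shows "TS p y0 h N < TS p y0 h N'"
proof (rule lift_Suc_mono_less[of "TS p y0 h", OF _ assms(2)])
  fix n
  have "p (y0 + h * real (Suc n)) > 0" "p (y0 + h * real n) > 0" using h by (auto intro!: pos)
  then show "TS p y0 h n < TS p y0 h (Suc n)" unfolding TS_def using h by simp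
qed

lemma LS_refine:
  assumes e: "\<epsilon> > 0" and j: "j > 0"
  shows "LS p y0 (\<epsilon>/real j) (j*N) \<ge> LS p y0 \<epsilon> N"
proof (induction N)
  case 0 then show ?case by (simp add: LS_def)
next
  case (Suc N)
  define h where "h = \<epsilon> / real j"
  have h: "h > 0" and hj: "h * real j = \<epsilon>" using e j by (auto simp: h_def)
  have jN: "j * Suc N = j*N + j" by simp
  have "(\<Sum>m<j. h * p (y0 + \<epsilon> * real (Suc N))) \<le> (\<Sum>m<j. h * p (y0 + h * real (Suc (j*N + m))))"
  proof (rule sum_mono)
    fix m assume m: "m \<in> {..<j}"
    have "Suc (j*N+m) \<le> j * Suc N" using m by simp
    then have "real (Suc (j*N+m)) \<le> real (j * Suc N)" by (rule of_nat_mono)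
    then have "real (Suc (j*N+m)) \<le> real j * real (Suc N)" by (simp only: of_nat_mult)
    then have "h * real (Suc (j*N+m)) \<le> h * (real j * real (Suc N))" using h by (intro mult_left_mono) auto
    then have "y0 + h * real (Suc (j*N + m)) \<le> y0 + \<epsilon> * real (Suc N)" using hj by (simp add: mult.assoc[symmetric])
    then show "h * p (y0 + \<epsilon> * real (Suc N)) \<le> h * p (y0 + h * real (Suc (j*N + m)))"
      using h by (intro mult_left_mono dec') auto
  qed
  also have "(\<Sum>m<j. h * p (y0 + \<epsilon> * real (Suc N))) = \<epsilon> * p (y0 + \<epsilon> * real (Suc N))"
    using hj by (simp add: mult.commute)
  finally have blk: "\<epsilon> * p (y0 + \<epsilon> * real (Suc N)) \<le> (\<Sum>m<j. h * p (y0 + h * real (Suc (j*N + m))))" .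
  have "LS p y0 h (j * Suc N) = LS p y0 h (j*N) + (\<Sum>m<j. h * p (y0 + h * real (Suc (j*N + m))))"
    unfolding jN by (rule LS_split[of p y0 h "j*N" j])
  moreover have "LS p y0 \<epsilon> (Suc N) = LS p y0 \<epsilon> N + \<epsilon> * p (y0 + \<epsilon> * real (Suc N))"
    unfolding LS_def by simp
  moreover have IH: "LS p y0 h (j*N) \<ge> LS p y0 \<epsilon> N" using Suc.IH unfolding h_def .
  ultimately have "LS p y0 h (j * Suc N) \<ge> LS p y0 \<epsilon> (Suc N)" using blk by linarith
  then show ?case unfolding h_def .
qed

lemma lin_sum0:
  assumes j: "j > 0" and L: "\<And>m. L m = A + (B-A)*real m/real j"
  shows "(\<Sum>m<r. L (Suc m) + L m) = 2*real r*A + (B-A)*real r^2/real j"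
proof (induction r)
  case 0 then show ?case by simp
next
  case (Suc r)
  have "(\<Sum>m<Suc r. L (Suc m) + L m) = (\<Sum>m<r. L (Suc m) + L m) + (L (Suc r) + L r)" by simp
  also have "\<dots> = 2*real r*A + (B-A)*real r^2/real j + (L (Suc r) + L r)" by (simp only: Suc.IH)
  also have "\<dots> = 2*real (Suc r)*A + (B-A)*real (Suc r)^2/real j"
    unfolding L using j by (simp add: field_simps power2_eq_square)
  finally show ?case .
qed

lemma lin_sum:
  assumes j: "j > 0"
  shows "(\<Sum>m<r. (A + (B-A)*real (Suc m)/real j) + (A + (B-A)*real m/real j))
     = 2*real r*A + (B-A)*real r^2/real j"
  by (rule lin_sum0[OF j, where L="\<lambda>m. A + (B-A)*real m/real j"]) simp

lemma TS_refine:
  assumes e: "\<epsilon> > 0" and j: "j > 0"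
  shows "TS p y0 (\<epsilon>/real j) (j*N) \<le> TS p y0 \<epsilon> N"
proof (induction N)
  case 0 then show ?case by (simp add: TS_def)
next
  case (Suc N)
  define h where "h = \<epsilon> / real j"
  have h: "h > 0" and hj: "h * real j = \<epsilon>" using e j by (auto simp: h_def)
  have jN: "j * Suc N = j*N + j" by simp
  define a where "a = y0 + \<epsilon> * real N"
  define A where "A = p a"
  define B where "B = p (a + \<epsilon>)"
  have a: "a \<ge> y0" using e by (simp add: a_def)
  have pt: "p (y0 + h * real (j*N + m)) \<le> A + (B-A)*real m/real j" if m: "m \<le> j" for m
  proof -
    define t where "t = real m / real j"
    have t: "0 \<le> t" "t \<le> 1" using m j by (auto simp: t_def)
    have "y0 + h * real (j*N + m) = (1-t)*a + t*(a+\<epsilon>)"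
      using j by (simp add: t_def a_def h_def field_simps)
    then have "p (y0 + h * real (j*N + m)) \<le> (1-t)*A + t*B"
      using conv[OF a _ t, of "a+\<epsilon>"] e by (simp add: A_def B_def)
    also have "\<dots> = A + (B-A)*real m/real j" using j by (simp add: t_def field_simps)
    finally show ?thesis .
  qed
  have "(\<Sum>m<j. h/2 * (p (y0 + h * real (Suc (j*N + m))) + p (y0 + h * real (j*N+m))))
      \<le> (\<Sum>m<j. h/2 * ((A + (B-A)*real (Suc m)/real j) + (A + (B-A)*real m/real j)))"
  proof (rule sum_mono)
    fix m assume m: "m \<in> {..<j}"
    have "p (y0 + h * real (Suc (j*N + m))) \<le> A + (B-A)*real (Suc m)/real j"
      using pt[of "Suc m"] m by simp
    moreover have "p (y0 + h * real (j*N + m)) \<le> A + (B-A)*real m/real j"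
      using pt[of m] m by simp
    ultimately show "h/2 * (p (y0 + h * real (Suc (j*N + m))) + p (y0 + h * real (j*N+m)))
      \<le> h/2 * ((A + (B-A)*real (Suc m)/real j) + (A + (B-A)*real m/real j))"
      using h by (intro mult_left_mono) auto
  qed
  also have "\<dots> = h/2 * (\<Sum>m<j. (A + (B-A)*real (Suc m)/real j) + (A + (B-A)*real m/real j))"
    by (rule sum_distrib_left[symmetric])
  also have "\<dots> = h/2 * (2*real j*A + (B-A)*real j^2/real j)"
    by (simp only: lin_sum[OF j])
  also have "\<dots> = \<epsilon>/2 * (B + A)"
    using j by (simp add: h_def field_simps power2_eq_square)
  finally have blk: "(\<Sum>m<j. h/2 * (p (y0 + h * real (Suc (j*N + m))) + p (y0 + h * real (j*N+m))))
      \<le> \<epsilon>/2 * (B + A)" .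
  have "TS p y0 h (j * Suc N) = TS p y0 h (j*N) +
     (\<Sum>m<j. h/2 * (p (y0 + h * real (Suc (j*N + m))) + p (y0 + h * real (j*N+m))))"
    unfolding jN by (rule TS_split[of p y0 h "j*N" j])
  moreover have "TS p y0 \<epsilon> (Suc N) = TS p y0 \<epsilon> N + \<epsilon>/2 * (B + A)"
  proof -
    have Beq: "B = p (y0 + \<epsilon> * real (Suc N))" unfolding B_def a_def by (simp add: algebra_simps)
    have Aeq: "A = p (y0 + \<epsilon> * real N)" unfolding A_def a_def by (rule refl)
    show ?thesis unfolding Beq Aeq TS_def by simp
  qed
  moreover have IH: "TS p y0 h (j*N) \<le> TS p y0 \<epsilon> N" using Suc.IH unfolding h_def .
  ultimately have "TS p y0 h (j * Suc N) \<le> TS p y0 \<epsilon> (Suc N)" using blk by linarith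
  then show ?case unfolding h_def .
qed

end


context pfun begin

lemma key:
  assumes e: "\<epsilon> > 0" and j: "j > 0" and b: "b \<ge> 0" and N0: "0 < N0" "b \<le> sigma_l p y0 \<epsilon> N0"
  shows "sigma_t p y0 (\<epsilon>/real j) (n3 p y0 b (\<epsilon>/real j)) \<le> b \<and>
         n3 p y0 b (\<epsilon>/real j) < n2 p y0 b (\<epsilon>/real j) \<and>
         (\<forall>N. sigma_t p y0 (\<epsilon>/real j) N \<le> b \<longrightarrow> N \<le> n3 p y0 b (\<epsilon>/real j))"
proof -
  define h where "h = \<epsilon>/real j"
  have h: "h > 0" using e j by (simp add: h_def)
  have "LS p y0 \<epsilon> N0 \<le> LS p y0 h (j*N0)" using LS_refine[OF e j, of N0] unfolding h_def .
  then have P: "0 < j*N0 \<and> b \<le> sigma_l p y0 h (j*N0)"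
    using N0 j unfolding sigma_l_LS by auto
  define m where "m = n2 p y0 b h"
  have Pm: "0 < m \<and> b \<le> sigma_l p y0 h m" unfolding m_def n2_def by (rule LeastI[of _ "j*N0"]) (rule P)
  have Tm: "TS p y0 h m > b" using TS_gt_LS[OF h, of m] Pm unfolding sigma_l_LS by linarith
  have bound: "N \<le> m" if "sigma_t p y0 h N \<le> b" for N
  proof (rule ccontr)
    assume "\<not> N \<le> m" then have "m < N" by simp
    then have "TS p y0 h m < TS p y0 h N" using TS_strict[OF h] by blast
    then show False using that Tm unfolding sigma_t_TS by linarith
  qed
  have Q0: "sigma_t p y0 h 0 \<le> b" using b by (simp add: sigma_t_def)
  have G: "sigma_t p y0 h (n3 p y0 b h) \<le> b" unfolding n3_def
    by (rule GreatestI_nat[where k=0 and b=m]) (use Q0 bound in auto)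
  have le: "N \<le> n3 p y0 b h" if "sigma_t p y0 h N \<le> b" for N unfolding n3_def
    by (rule Greatest_le_nat[where b=m]) (use that bound in auto)
  have "n3 p y0 b h < m"
  proof (rule ccontr)
    assume "\<not> n3 p y0 b h < m" then have "m \<le> n3 p y0 b h" by simp
    then have "m = n3 p y0 b h \<or> m < n3 p y0 b h" by auto
    then have "TS p y0 h m \<le> TS p y0 h (n3 p y0 b h)"
      using TS_strict[OF h, of m "n3 p y0 b h"] by (auto simp: less_imp_le)
    then show False using G Tm unfolding sigma_t_TS by linarith
  qed
  then show ?thesis using G le unfolding h_def m_def by auto
qed

end

theorem lemma2:
  fixes f f' p p' p'' :: "real \<Rightarrow> real" and y0 b \<epsilon> :: real
  assumes b_pos: "b > 0" and eps_pos: "\<epsilon> > 0"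
    and p_def: "\<And>y. y \<ge> y0 \<Longrightarrow> f y \<noteq> 0 \<and> p y = 1 / f y"
    and f_deriv: "\<And>y. y \<ge> y0 \<Longrightarrow> (f has_real_derivative f' y) (at y within {y0..})"
    and p_deriv: "\<And>y. y \<ge> y0 \<Longrightarrow> (p has_real_derivative p' y) (at y within {y0..})"
    and p'_deriv: "\<And>y. y \<ge> y0 \<Longrightarrow> (p' has_real_derivative p'' y) (at y within {y0..})"
    and f_y0: "f y0 > 0"
    and f'_pos: "\<And>y. y \<ge> y0 \<Longrightarrow> f' y > 0"
    and p''_pos: "\<And>y. y \<ge> y0 \<Longrightarrow> p'' y > 0"
    and b_lt_int: "ennreal b < (\<integral>\<^sup>+ y. ennreal (p y) * indicator {y0..} y \<partial>lborel)"
    and n2_1_exists: "\<exists>N::nat. 0 < N \<and> b \<le> sigma_l p y0 \<epsilon> N"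
  shows "\<forall>j::nat. 0 < j \<longrightarrow>
           n2 p y0 b (\<epsilon> / real j) > n3 p y0 b (\<epsilon> / real j) \<and>
           (\<epsilon> / real j) * real (n3 p y0 b (\<epsilon> / real j)) \<ge> (\<epsilon> / 1) * real (n3 p y0 b (\<epsilon> / 1))"
proof -
  have cf: "continuous_on {y0..} f" by (rule cont_of_within[OF f_deriv])
  have cp: "continuous_on {y0..} p" by (rule cont_of_within[OF p_deriv])
  have cp': "continuous_on {y0..} p'" by (rule cont_of_within[OF p'_deriv])
  have f_inc: "f x < f y" if "y0 \<le> x" "x < y" for x y
  proof (rule DERIV_pos_imp_increasing_open[OF that(2)])
    fix z assume "x < z" "z < y"
    then show "\<exists>d. DERIV f z :> d \<and> d > 0"
      using that at_of_within[OF _ f_deriv[of z]] f'_pos[of z] by auto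
  next
    show "continuous_on {x..y} f" by (rule continuous_on_subset[OF cf]) (use that in auto)
  qed
  have fpos: "f y > 0" if "y0 \<le> y" for y
  proof (cases "y = y0")
    case True then show ?thesis using f_y0 by simp
  next
    case False then show ?thesis using f_inc[of y0 y] that f_y0 by auto
  qed
  have pos: "p y > 0" if "y0 \<le> y" for y using p_def[OF that] fpos[OF that] by simp
  have dec: "p y < p x" if "y0 \<le> x" "x < y" for x y
  proof -
    have "0 < f x" "f x < f y" using fpos f_inc that by auto
    then have "1 / f y < 1 / f x" by (simp add: frac_less2)
    then show ?thesis using p_def[of x] p_def[of y] that by simp
  qed
  have mono': "p' u \<le> p' v" if "y0 \<le> u" "u \<le> v" for u v
  proof (rule DERIV_nonneg_imp_increasing_open[OF that(2)])
    fix z assume "u < z" "z < v"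
    then show "\<exists>d. DERIV p' z :> d \<and> d \<ge> 0"
      using that at_of_within[OF _ p'_deriv[of z]] p''_pos[of z] by (auto intro!: exI[of _ "p'' z"])
  next
    show "continuous_on {u..v} p'" by (rule continuous_on_subset[OF cp']) (use that in auto)
  qed
  have conv: "p ((1-t)*x + t*y) \<le> (1-t)*p x + t*p y"
    if x: "y0 \<le> x" "x \<le> y" and t: "0 \<le> t" "t \<le> 1" for x y t
  proof (cases "t = 0 \<or> t = 1 \<or> x = y")
    case True
    then show ?thesis
    proof (elim disjE)
      assume "x = y"
      then show ?thesis by (simp add: algebra_simps)
    qed auto
  next
    case False
    then have t': "0 < t" "t < 1" "x < y" using t x by auto
    show ?thesis
    proof (rule conv_lemma[where p'=p'])
      fix z assume "x < z" "z < y"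
      then show "(p has_real_derivative p' z) (at z)"
        using x at_of_within[OF _ p_deriv[of z]] by auto
    next
      show "continuous_on {x..y} p" by (rule continuous_on_subset[OF cp]) (use x in auto)
    next
      fix u v assume "x < u" "u \<le> v" "v < y"
      then show "p' u \<le> p' v" using x by (intro mono') auto
    qed (use t' in auto)
  qed
  interpret pfun p y0
    by unfold_locales (use pos dec conv in auto)
  obtain N0 where N0: "0 < N0" "b \<le> sigma_l p y0 \<epsilon> N0" using n2_1_exists by blast
  have b0: "b \<ge> 0" using b_pos by simp
  show ?thesis
  proof (intro allI impI conjI)
    fix j :: nat assume j: "0 < j"
    note K = key[OF eps_pos j b0 N0]
    show "n3 p y0 b (\<epsilon> / real j) < n2 p y0 b (\<epsilon> / real j)" using K by blast
    have K1: "sigma_t p y0 \<epsilon> (n3 p y0 b \<epsilon>) \<le> b"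
      using key[OF eps_pos _ b0 N0, of 1] by simp
    have "TS p y0 (\<epsilon>/real j) (j * n3 p y0 b \<epsilon>) \<le> TS p y0 \<epsilon> (n3 p y0 b \<epsilon>)"
      by (rule TS_refine[OF eps_pos j])
    then have "sigma_t p y0 (\<epsilon>/real j) (j * n3 p y0 b \<epsilon>) \<le> b"
      using K1 unfolding sigma_t_TS by linarith
    then have le: "j * n3 p y0 b \<epsilon> \<le> n3 p y0 b (\<epsilon>/real j)" using K by blast
    have "\<epsilon> * real (n3 p y0 b \<epsilon>) = (\<epsilon>/real j) * real (j * n3 p y0 b \<epsilon>)"
      using j by simp
    also have "\<dots> \<le> (\<epsilon>/real j) * real (n3 p y0 b (\<epsilon>/real j))"
    proof (rule mult_left_mono)
      show "real (j * n3 p y0 b \<epsilon>) \<le> real (n3 p y0 b (\<epsilon>/real j))" using le by (rule of_nat_mono)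
    qed (use eps_pos j in simp)
    finally show "(\<epsilon> / 1) * real (n3 p y0 b (\<epsilon> / 1)) \<le> (\<epsilon> / real j) * real (n3 p y0 b (\<epsilon> / real j))"
      by simp
  qed
qed

end
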